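(* Let $\mathcal{D}$ be a distribution on $\mathbb{R}^d\times\{\pm1\}$ generated by the Massart noise model with noise bound $\eta<1/2$ and target $f(\mathbf{x})=\mathrm{sign}(\langle\mathbf{w}^*,\mathbf{x}\rangle)$, $\mathbf{w}^*\in\mathbb{S}^{d-1}$, whose marginal $\mathcal{D}_{\mathbf{x}}$ is $(U,R)$-bounded. Fix $\theta\in(0,\pi/2)$ and let $\widehat{\mathbf{w}}\in\mathbb{S}^{d-1}$ satisfy $\theta(\widehat{\mathbf{w}},\mathbf{w}^* )\in(\theta,\pi-\theta)$. If $0<\sigma\le\frac{R}{2U}\sqrt{1-2\eta}\,\sin\theta$, then $\mathcal{L}^{\mathrm{ramp}}_\sigma$ is differentiable at $\widehat{\mathbf{w}}$ and $$\|\nabla_{\mathbf{w}}\mathcal{L}^{\mathrm{ramp}}_\sigma(\widehat{\mathbf{w}})\|_2\ge\frac{R^2(1-2\eta)}{8U}.$$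
   Context: $\mathrm{sign}(t)=1$ if $t\ge0$, $-1$ otherwise; $\theta(\cdot,\cdot)\in[0,\pi]$ is the angle between vectors. Massart noise model: there is an unknown measurable $\eta(\cdot):\mathbb{R}^d\to[0,\eta]$; $(\mathbf{x},y)\sim\mathcal{D}$ is produced by drawing $\mathbf{x}\sim\mathcal{D}_{\mathbf{x}}$ and setting $y=f(\mathbf{x})$ with probability $1-\eta(\mathbf{x})$ and $y=-f(\mathbf{x})$ with probability $\eta(\mathbf{x})$. Ramp function: $r_\sigma(t)=0$ for $t<-\sigma/2$, $r_\sigma(t)=t/\sigma+1/2$ for $|t|\le\sigma/2$, $r_\sigma(t)=1$ for $t>\sigma/2$. Ramp surrogate: for $\mathbf{w}\ne0$, $\mathcal{L}^{\mathrm{ramp}}_\sigma(\mathbf{w})=\mathbb{E}_{(\mathbf{x},y)\sim\mathcal{D}}\big[r_\sigma\big(-y\langle\mathbf{w},\mathbf{x}\rangle/\|\mathbf{w}\|_2\big)\big]$. $(U,R)$-bounded: $\mathcal{D}_{\mathbf{x}}$ is isotropic (zero mean, identity covariance) and for every 2-dimensional subspace $V$ the projection of $\mathcal{D}_{\mathbf{x}}$ onto $V$ has a density $\gamma_V$ with $\gamma_V(\mathbf{x})\ge1/U$ whenever $\|\mathbf{x}\|_2\le R$, and $\gamma_V(\mathbf{x})\le U$ for all $\mathbf{x}\in V$. *)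

theory Defs
  imports "HOL-Analysis.Analysis" "HOL-Probability.Probability"
begin

definition sgn1 :: "real \<Rightarrow> real" where
  "sgn1 t = (if t \<ge> 0 then 1 else -1)"

definition vec_angle :: "'a::real_inner \<Rightarrow> 'a \<Rightarrow> real" where
  "vec_angle u v = arccos ((u \<bullet> v) / (norm u * norm v))"

definition ramp :: "real \<Rightarrow> real \<Rightarrow> real" where
  "ramp \<sigma> t = (if t < - \<sigma> / 2 then 0 else if t \<le> \<sigma> / 2 then t / \<sigma> + 1 / 2 else 1)"

definition isotropic :: "(real^'d) measure \<Rightarrow> bool" where
  "isotropic Dx \<longleftrightarrow>
     (\<forall>i. integrable Dx (\<lambda>x. x $ i) \<and> (\<integral>x. x $ i \<partial>Dx) = 0) \<and>
     (\<forall>i j. integrable Dx (\<lambda>x. x $ i * x $ j) \<and>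
            (\<integral>x. x $ i * x $ j \<partial>Dx) = (if i = j then 1 else 0))"

text \<open>A 2-dimensional subspace V is given by an orthonormal
  basis (u1,u2); the projection onto V is identified with x |-> (u1.x, u2.x) in R^2
  (an isometry V -> R^2), and its density is taken w.r.t. Lebesgue measure on R^2.\<close>
definition UR_bounded :: "real \<Rightarrow> real \<Rightarrow> (real^'d) measure \<Rightarrow> bool" where
  "UR_bounded U R Dx \<longleftrightarrow>
     U > 0 \<and> R > 0 \<and> prob_space Dx \<and> sets Dx = sets borel \<and> isotropic Dx \<and>
     (\<forall>u1 u2. norm u1 = 1 \<and> norm u2 = 1 \<and> u1 \<bullet> u2 = 0 \<longrightarrow>
        (\<exists>g :: real \<times> real \<Rightarrow> ennreal.
           distributed Dx lborel (\<lambda>x. (u1 \<bullet> x, u2 \<bullet> x)) g \<and>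
           (\<forall>z. norm z \<le> R \<longrightarrow> ennreal (1 / U) \<le> g z) \<and>
           (\<forall>z. g z \<le> ennreal U)))"

definition massart_noise :: "real \<Rightarrow> (real^'d \<Rightarrow> real) \<Rightarrow> bool" where
  "massart_noise \<eta> \<eta>f \<longleftrightarrow> \<eta>f \<in> borel_measurable borel \<and> (\<forall>x. 0 \<le> \<eta>f x \<and> \<eta>f x \<le> \<eta>)"

text \<open>Ramp surrogate loss E_{(x,y)~D}[r_sigma(-y <w,x>/||w||)] for the Massart distribution D
  with marginal Dx, target f and noise function eta_f: given x, y = f x with probability
  1 - eta_f x and y = - f x with probability eta_f x.\<close>
definition ramp_loss ::
  "(real^'d) measure \<Rightarrow> (real^'d \<Rightarrow> real) \<Rightarrow> (real^'d \<Rightarrow> real) \<Rightarrow> real \<Rightarrow> real^'d \<Rightarrow> real" where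
  "ramp_loss Dx f \<eta>f \<sigma> w =
     (\<integral>x. (1 - \<eta>f x) * ramp \<sigma> (- f x * (w \<bullet> x) / norm w)
          + \<eta>f x * ramp \<sigma> (f x * (w \<bullet> x) / norm w) \<partial>Dx)"

end

theory Submission
  imports Defs
begin

definition clampf :: "real \<Rightarrow> real \<Rightarrow> real" where
  "clampf \<sigma> t = max (-\<sigma>/2) (min (\<sigma>/2) t)"

lemma ramp_clamp: "\<sigma> > 0 \<Longrightarrow> ramp \<sigma> u = clampf \<sigma> u / \<sigma> + 1/2"
  unfolding ramp_def clampf_def by (auto simp: field_simps max_def min_def)

lemma loss_pointwise:
  assumes "\<sigma> > 0" "f = 1 \<or> f = -1"
  shows "(1 - e) * ramp \<sigma> (- f * a / n) + e * ramp \<sigma> (f * a / n)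
      = 1/2 - f * (1 - 2*e) * clampf \<sigma> (a / n) / \<sigma>"
proof -
  have neg: "clampf \<sigma> (- t) = - clampf \<sigma> t" for t unfolding clampf_def using assms(1) by (auto simp: max_def min_def)
  show ?thesis using assms neg by (auto simp add: ramp_clamp field_simps)
qed

lemma clamp_err:
  assumes "\<sigma> > 0" "\<bar>d\<bar> \<le> r"
  shows "\<bar>clampf \<sigma> (t + d) - clampf \<sigma> t - (if \<bar>t\<bar> < \<sigma>/2 then d else 0)\<bar>
     \<le> 2 * r * (if \<bar>\<bar>t\<bar> - \<sigma>/2\<bar> \<le> r then 1 else 0)"
  using assms unfolding clampf_def by (auto simp: max_def min_def abs_if split: if_splits)

lemma rect_lborel:
  fixes A B :: "real set"
  assumes "A \<in> sets borel" "B \<in> sets borel"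
  shows "emeasure (lborel :: (real \<times> real) measure) (A \<times> B) = emeasure lborel A * emeasure lborel B"
  using assms by (simp add: lborel_prod[symmetric] lborel.emeasure_pair_measure_Times)

lemma vd:
  fixes w0 :: "'a::real_inner"
  assumes "norm w0 = 1"
  shows "((\<lambda>w. inverse (norm w) *\<^sub>R w) has_derivative (\<lambda>h. h - (w0 \<bullet> h) *\<^sub>R w0)) (at w0)"
proof -
  have "w0 \<noteq> 0" using assms by auto
  show ?thesis
    apply (rule has_derivative_eq_rhs)
     apply (rule derivative_eq_intros | simp add: \<open>w0 \<noteq> 0\<close>)+
    using assms apply (auto simp: fun_eq_iff algebra_simps inner_commute)
    using has_derivative_norm[OF \<open>w0 \<noteq> 0\<close>] assms by (simp add: sgn_div_norm)
qed

lemma int_bounded: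
  assumes "prob_space M" "f \<in> borel_measurable M" "\<And>x. norm (f x) \<le> (C::real)"
  shows "integrable M (f :: _ \<Rightarrow> 'b::{banach,second_countable_topology})"
proof (rule Bochner_Integration.integrable_bound[of M "\<lambda>x. C"])
  show "integrable M (\<lambda>x. C)" using assms(1) by (simp add: prob_space.finite_measure finite_measure.integrable_const)
  show "f \<in> borel_measurable M" by fact
  show "AE x in M. norm (f x) \<le> norm C" using assms(3) by (auto intro: order_trans[OF _ abs_ge_self])
qed

lemma int_normdom:
  fixes f :: "'a::real_normed_vector \<Rightarrow> 'b::{banach,second_countable_topology}"
  assumes "integrable M norm" "f \<in> borel_measurable M" "\<And>x. norm (f x) \<le> (C::real) * norm x"
  shows "integrable M f"
proof (rule Bochner_Integration.integrable_bound[of M "\<lambda>x. C * norm x"])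
  show "integrable M (\<lambda>x. C * norm x)" using assms(1) by simp
  show "f \<in> borel_measurable M" by fact
  show "AE x in M. norm (f x) \<le> norm (C * norm x)" using assms(3)
    by (auto intro: order_trans[OF _ abs_ge_self])
qed

lemma V_close:
  fixes y w0 :: "'a::real_normed_vector"
  assumes "norm w0 = 1" "norm (y - w0) \<le> 1/2"
  shows "norm (inverse (norm y) *\<^sub>R y - w0) \<le> 2 * norm (y - w0)"
proof -
  have ny: "\<bar>norm y - 1\<bar> \<le> norm (y - w0)" using assms(1) norm_triangle_ineq3[of y w0] by simp
  hence y0: "norm y > 0" using assms(2) by linarith
  have "norm (inverse (norm y) *\<^sub>R y - y) = \<bar>inverse (norm y) - 1\<bar> * norm y"
    by (metis norm_scaleR scaleR_diff_left scaleR_one)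
  also have "\<dots> = \<bar>1 - norm y\<bar>" using y0 by (simp add: field_simps abs_mult[symmetric] abs_minus_commute)
  also have "\<dots> \<le> norm (y - w0)" using ny by (simp add: abs_minus_commute)
  finally have 1: "norm (inverse (norm y) *\<^sub>R y - y) \<le> norm (y - w0)" .
  have "norm (inverse (norm y) *\<^sub>R y - w0) \<le> norm (inverse (norm y) *\<^sub>R y - y) + norm (y - w0)"
    by (metis norm_triangle_ineq diff_add_cancel add_diff_eq)
  thus ?thesis using 1 by linarith
qed

lemma meas_test:
  fixes M :: "(real^'d) measure" and \<beta> :: "real^'d \<Rightarrow> real"
  assumes bm: "\<beta> \<in> borel_measurable borel"
  shows "(\<lambda>x. \<beta> x * clampf \<sigma> (c \<bullet> x)) \<in> borel_measurable borel"
  apply (intro borel_measurable_times bm)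
  apply (rule borel_measurable_continuous_onI)
  unfolding clampf_def by (intro continuous_intros)

lemma meas_test2:
  fixes \<beta> :: "real^'d \<Rightarrow> real"
  assumes bm: "\<beta> \<in> borel_measurable borel"
  shows "(\<lambda>x. (\<beta> x * (if \<bar>w0 \<bullet> x\<bar> < \<sigma>/2 then 1 else 0)) *\<^sub>R (x - (w0 \<bullet> x) *\<^sub>R w0)) \<in> borel_measurable borel"
  using bm by measurable

lemma meas_test3:
  shows "(\<lambda>x::real^'d. norm x * (if \<bar>\<bar>w0 \<bullet> x\<bar> - \<sigma>/2\<bar> \<le> \<delta> * norm x then 1 else 0::real)) \<in> borel_measurable borel"
  by measurable

lemma diff_core:
  fixes M :: "(real^'d) measure" and \<beta> :: "real^'d \<Rightarrow> real" and w0 :: "real^'d"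
  assumes P: "prob_space M" and sets: "sets M = sets borel"
    and intn: "integrable M norm"
    and bm: "\<beta> \<in> borel_measurable borel" and bb: "\<And>x. \<bar>\<beta> x\<bar> \<le> 1"
    and w0: "norm w0 = 1" and sig: "\<sigma> > 0"
    and ae: "AE x in M. \<bar>w0 \<bullet> x\<bar> \<noteq> \<sigma>/2"
  defines "GF \<equiv> \<integral>x. (\<beta> x * (if \<bar>w0 \<bullet> x\<bar> < \<sigma>/2 then 1 else 0)) *\<^sub>R (x - (w0 \<bullet> x) *\<^sub>R w0) \<partial>M"
  shows "((\<lambda>w. \<integral>x. \<beta> x * clampf \<sigma> ((inverse (norm w) *\<^sub>R w) \<bullet> x) \<partial>M) has_derivative (\<lambda>h. GF \<bullet> h)) (at w0)"
proof -
  define V where "V w = inverse (norm w) *\<^sub>R w" for w :: "real^'d"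
  define I0 where "I0 x = (if \<bar>w0 \<bullet> x\<bar> < \<sigma>/2 then 1 else 0::real)" for x :: "real^'d"
  define ind where "ind \<delta> x = (if \<bar>\<bar>w0 \<bullet> x\<bar> - \<sigma>/2\<bar> \<le> \<delta> * norm x then 1 else 0::real)" for \<delta> x
  define \<Psi> where "\<Psi> \<delta> = (\<integral>x. norm x * ind \<delta> x \<partial>M)" for \<delta>
  define K where "K = (\<integral>x. norm x \<partial>M)"
  note ms = measurable_cong_sets[OF sets refl]
  have Vw0: "V w0 = w0" using w0 by (simp add: V_def)
  have K0: "K \<ge> 0" unfolding K_def by (rule integral_nonneg_AE) auto
  have I0b: "I0 x = 0 \<or> I0 x = 1" for x by (simp add: I0_def)
  have intF: "integrable M (\<lambda>x. \<beta> x * clampf \<sigma> (c \<bullet> x))" for c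
  proof (rule int_bounded[OF P, where C="\<sigma>/2"])
    show "(\<lambda>x. \<beta> x * clampf \<sigma> (c \<bullet> x)) \<in> borel_measurable M"
      unfolding ms using meas_test[OF bm] .
    show "norm (\<beta> x * clampf \<sigma> (c \<bullet> x)) \<le> \<sigma>/2" for x
    proof -
      have "\<bar>clampf \<sigma> (c \<bullet> x)\<bar> \<le> \<sigma>/2" using sig unfolding clampf_def by auto
      moreover have "\<bar>\<beta> x\<bar> * \<bar>clampf \<sigma> (c \<bullet> x)\<bar> \<le> \<bar>clampf \<sigma> (c \<bullet> x)\<bar>"
        using bb[of x] by (simp add: mult_left_le_one_le)
      ultimately show ?thesis by (simp add: abs_mult)
    qed
  qed
  have mG: "(\<lambda>x. (\<beta> x * I0 x) *\<^sub>R (x - (w0 \<bullet> x) *\<^sub>R w0)) \<in> borel_measurable M"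
    unfolding ms I0_def using meas_test2[OF bm] .
  have intG: "integrable M (\<lambda>x. (\<beta> x * I0 x) *\<^sub>R (x - (w0 \<bullet> x) *\<^sub>R w0))"
  proof (rule int_normdom[OF intn mG, where C=2])
    fix x
    have a: "\<bar>\<beta> x * I0 x\<bar> \<le> 1" using bb[of x] I0b[of x] by auto
    have b: "norm (x - (w0 \<bullet> x) *\<^sub>R w0) \<le> 2 * norm x"
    proof -
      have "norm (x - (w0 \<bullet> x) *\<^sub>R w0) \<le> norm x + \<bar>w0 \<bullet> x\<bar>" using w0
        by (metis mult.right_neutral norm_scaleR norm_triangle_ineq4)
      moreover have "\<bar>w0 \<bullet> x\<bar> \<le> norm x" using Cauchy_Schwarz_ineq2[of w0 x] w0 by simp
      ultimately show ?thesis by linarith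
    qed
    show "norm ((\<beta> x * I0 x) *\<^sub>R (x - (w0 \<bullet> x) *\<^sub>R w0)) \<le> 2 * norm x"
      using mult_mono[OF a b] by simp
  qed
  have intGh: "integrable M (\<lambda>x. \<beta> x * I0 x * ((h - (w0 \<bullet> h) *\<^sub>R w0) \<bullet> x))" for h
  proof -
    have eqf: "(\<lambda>x. (\<beta> x * I0 x) *\<^sub>R (x - (w0 \<bullet> x) *\<^sub>R w0) \<bullet> h) = (\<lambda>x. \<beta> x * I0 x * ((h - (w0 \<bullet> h) *\<^sub>R w0) \<bullet> x))"
      by (rule ext) (simp add: algebra_simps inner_commute)
    show ?thesis using integrable_inner_left[OF intG, of h] unfolding eqf .
  qed
  have GFh: "GF \<bullet> h = (\<integral>x. \<beta> x * I0 x * ((h - (w0 \<bullet> h) *\<^sub>R w0) \<bullet> x) \<partial>M)" for h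
  proof -
    have "GF \<bullet> h = (\<integral>x. (\<beta> x * I0 x) *\<^sub>R (x - (w0 \<bullet> x) *\<^sub>R w0) \<bullet> h \<partial>M)"
      unfolding GF_def I0_def by (rule integral_inner_left[symmetric]) (rule intG[unfolded I0_def])
    also have "\<dots> = (\<integral>x. \<beta> x * I0 x * ((h - (w0 \<bullet> h) *\<^sub>R w0) \<bullet> x) \<partial>M)"
      by (rule Bochner_Integration.integral_cong) (auto simp add: algebra_simps inner_commute)
    finally show ?thesis .
  qed
  have mind: "(\<lambda>x. norm x * ind \<delta> x) \<in> borel_measurable M" for \<delta>
    unfolding ms ind_def by (rule meas_test3)
  have intind: "integrable M (\<lambda>x. norm x * ind \<delta> x)" for \<delta>
    by (rule int_normdom[OF intn mind, where C=1]) (simp add: ind_def)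
  have \<Psi>mono: "\<Psi> \<delta> \<le> \<Psi> \<delta>'" if "0 \<le> \<delta>" "\<delta> \<le> \<delta>'" for \<delta> \<delta>'
    unfolding \<Psi>_def
  proof (rule integral_mono[OF intind intind])
    fix x :: "real^'d"
    have "\<delta> * norm x \<le> \<delta>' * norm x" using that by (simp add: mult_right_mono)
    thus "norm x * ind \<delta> x \<le> norm x * ind \<delta>' x" by (auto simp: ind_def)
  qed
  have lim: "(\<lambda>n. \<Psi> (inverse (real (Suc n)))) \<longlonglongrightarrow> 0"
  proof -
    have "(\<lambda>n. \<integral>x. norm x * ind (inverse (real (Suc n))) x \<partial>M) \<longlonglongrightarrow> (\<integral>x. 0 \<partial>M)"
    proof (rule integral_dominated_convergence[where w=norm])
      show "(\<lambda>x. 0::real) \<in> borel_measurable M" by simp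
      show "(\<lambda>x. norm x * ind (inverse (real (Suc n))) x) \<in> borel_measurable M" for n by (rule mind)
      show "integrable M norm" by (rule intn)
      show "AE x in M. norm (norm x * ind (inverse (real (Suc n))) x) \<le> norm x" for n
        by (auto simp: ind_def)
      show "AE x in M. (\<lambda>n. norm x * ind (inverse (real (Suc n))) x) \<longlonglongrightarrow> 0"
        using ae
      proof eventually_elim
        case (elim x)
        define m where "m = \<bar>\<bar>w0 \<bullet> x\<bar> - \<sigma>/2\<bar>"
        have m0: "m > 0" using elim by (auto simp: m_def)
        have "(\<lambda>n. inverse (real (Suc n)) * norm x) \<longlonglongrightarrow> 0"
          by (rule tendsto_mult_left_zero[OF LIMSEQ_inverse_real_of_nat])
        hence "eventually (\<lambda>n. inverse (real (Suc n)) * norm x < m) sequentially"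
          using m0 by (rule order_tendstoD(2))
        hence "eventually (\<lambda>n. norm x * ind (inverse (real (Suc n))) x = 0) sequentially"
          by eventually_elim (auto simp: ind_def m_def)
        thus ?case by (rule tendsto_eventually)
      qed
    qed
    thus ?thesis by (simp add: \<Psi>_def)
  qed
  show ?thesis
    unfolding has_derivative_at_alt
  proof (intro conjI allI impI)
    show "bounded_linear ((\<bullet>) GF)" by (rule bounded_linear_inner_right)
    fix \<epsilon> :: real assume e0: "\<epsilon> > 0"
    obtain N where N: "\<Psi> (inverse (real (Suc N))) < \<epsilon>/8"
      using order_tendstoD(2)[OF lim, of "\<epsilon>/8"] e0 by (auto simp: eventually_sequentially)
    define \<delta>0 where "\<delta>0 = inverse (real (Suc N))"
    have d00: "\<delta>0 > 0" by (simp add: \<delta>0_def)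
    define e where "e = \<epsilon> / (2 * (K + 1))"
    have e0': "e > 0" using e0 K0 by (simp add: e_def)
    have eK: "e * K \<le> \<epsilon>/2" using e0 K0 by (simp add: e_def field_simps)
    obtain d where d0: "d > 0" and dd: "\<And>y. norm (y - w0) < d \<Longrightarrow>
        norm (V y - V w0 - (y - w0 - (w0 \<bullet> (y - w0)) *\<^sub>R w0)) \<le> e * norm (y - w0)"
      using vd[OF w0, unfolded has_derivative_at_alt] e0' unfolding V_def by blast
    define dd where "dd = min d (min (1/2) (\<delta>0/2))"
    have dd0: "dd > 0" using d0 d00 by (simp add: dd_def)
    show "\<exists>d>0. \<forall>y. norm (y - w0) < d \<longrightarrow>
        norm ((\<integral>x. \<beta> x * clampf \<sigma> ((inverse (norm y) *\<^sub>R y) \<bullet> x) \<partial>M) -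
              (\<integral>x. \<beta> x * clampf \<sigma> ((inverse (norm w0) *\<^sub>R w0) \<bullet> x) \<partial>M) - GF \<bullet> (y - w0))
        \<le> \<epsilon> * norm (y - w0)"
    proof (intro exI[of _ dd] conjI dd0 allI impI)
      fix y assume y: "norm (y - w0) < dd"
      define h where "h = y - w0"
      define nh where "nh = norm h"
      have nhd: "nh < d" "nh \<le> 1/2" "2 * nh \<le> \<delta>0" using y by (auto simp: dd_def nh_def h_def)
      have Vy: "norm (V y - w0) \<le> 2 * nh"
        using V_close[OF w0, of y] nhd by (simp add: V_def nh_def h_def)
      have Vd: "norm (V y - V w0 - (h - (w0 \<bullet> h) *\<^sub>R w0)) \<le> e * nh"
        using dd[of y] nhd by (simp add: h_def nh_def)
      define Fd where "Fd x = \<beta> x * clampf \<sigma> (V y \<bullet> x) - \<beta> x * clampf \<sigma> (V w0 \<bullet> x)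
            - \<beta> x * I0 x * ((h - (w0 \<bullet> h) *\<^sub>R w0) \<bullet> x)" for x
      have eq: "(\<integral>x. \<beta> x * clampf \<sigma> ((inverse (norm y) *\<^sub>R y) \<bullet> x) \<partial>M) -
              (\<integral>x. \<beta> x * clampf \<sigma> ((inverse (norm w0) *\<^sub>R w0) \<bullet> x) \<partial>M) - GF \<bullet> (y - w0)
           = (\<integral>x. Fd x \<partial>M)"
      proof -
        have "(\<integral>x. Fd x \<partial>M) = (\<integral>x. \<beta> x * clampf \<sigma> (V y \<bullet> x) - \<beta> x * clampf \<sigma> (V w0 \<bullet> x) \<partial>M)
            - (\<integral>x. \<beta> x * I0 x * ((h - (w0 \<bullet> h) *\<^sub>R w0) \<bullet> x) \<partial>M)"
          unfolding Fd_def by (rule Bochner_Integration.integral_diff[OF Bochner_Integration.integrable_diff[OF intF intF] intGh])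
        also have "(\<integral>x. \<beta> x * clampf \<sigma> (V y \<bullet> x) - \<beta> x * clampf \<sigma> (V w0 \<bullet> x) \<partial>M)
            = (\<integral>x. \<beta> x * clampf \<sigma> (V y \<bullet> x) \<partial>M) - (\<integral>x. \<beta> x * clampf \<sigma> (V w0 \<bullet> x) \<partial>M)"
          by (rule Bochner_Integration.integral_diff[OF intF intF])
        finally show ?thesis unfolding GFh h_def[symmetric] V_def[symmetric] by simp
      qed
      have intFd: "integrable M Fd" unfolding Fd_def by (simp add: intF intGh)
      have pw: "\<bar>Fd x\<bar> \<le> 4 * nh * (norm x * ind (2 * nh) x) + e * nh * norm x" for x
      proof -
        define t0 where "t0 = w0 \<bullet> x"
        define \<Delta> where "\<Delta> = (V y - w0) \<bullet> x"
        define L where "L = (h - (w0 \<bullet> h) *\<^sub>R w0) \<bullet> x"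
        have Vyx: "V y \<bullet> x = t0 + \<Delta>" by (simp add: t0_def \<Delta>_def inner_diff_left)
        have dl: "\<bar>\<Delta>\<bar> \<le> 2 * nh * norm x"
          using order_trans[OF Cauchy_Schwarz_ineq2[of "V y - w0" x] mult_right_mono[OF Vy norm_ge_zero]]
          by (simp add: \<Delta>_def)
        have dL: "\<bar>\<Delta> - L\<bar> \<le> e * nh * norm x"
        proof -
          have "\<Delta> - L = (V y - V w0 - (h - (w0 \<bullet> h) *\<^sub>R w0)) \<bullet> x"
            by (simp add: \<Delta>_def L_def Vw0 inner_diff_left)
          thus ?thesis
            using order_trans[OF Cauchy_Schwarz_ineq2[of "V y - V w0 - (h - (w0 \<bullet> h) *\<^sub>R w0)" x]
                mult_right_mono[OF Vd norm_ge_zero]] by simp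
        qed
        have ce: "\<bar>clampf \<sigma> (t0 + \<Delta>) - clampf \<sigma> t0 - (if \<bar>t0\<bar> < \<sigma>/2 then \<Delta> else 0)\<bar>
            \<le> 2 * (2 * nh * norm x) * (if \<bar>\<bar>t0\<bar> - \<sigma>/2\<bar> \<le> 2 * nh * norm x then 1 else 0)"
          by (rule clamp_err[OF sig dl])
        have split: "clampf \<sigma> (t0 + \<Delta>) - clampf \<sigma> t0 - I0 x * L
           = (clampf \<sigma> (t0 + \<Delta>) - clampf \<sigma> t0 - (if \<bar>t0\<bar> < \<sigma>/2 then \<Delta> else 0)) + I0 x * (\<Delta> - L)"
          by (simp add: I0_def t0_def algebra_simps)
        have i0: "\<bar>I0 x * (\<Delta> - L)\<bar> \<le> e * nh * norm x" using I0b[of x] dL by auto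
        have "\<bar>Fd x\<bar> = \<bar>\<beta> x\<bar> * \<bar>clampf \<sigma> (t0 + \<Delta>) - clampf \<sigma> t0 - I0 x * L\<bar>"
          unfolding Fd_def Vyx[symmetric] Vw0 t0_def[symmetric] L_def[symmetric]
          by (simp add: abs_mult[symmetric] algebra_simps)
        also have "\<dots> \<le> \<bar>clampf \<sigma> (t0 + \<Delta>) - clampf \<sigma> t0 - I0 x * L\<bar>"
          using bb[of x] by (simp add: mult_left_le_one_le)
        also have "\<dots> \<le> 2 * (2 * nh * norm x) * (if \<bar>\<bar>t0\<bar> - \<sigma>/2\<bar> \<le> 2 * nh * norm x then 1 else 0) + e * nh * norm x"
          unfolding split using ce i0 abs_triangle_ineq by (smt (verit))
        also have "\<dots> = 4 * nh * (norm x * ind (2 * nh) x) + e * nh * norm x"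
          by (simp add: ind_def t0_def)
        finally show ?thesis .
      qed
      have "norm (\<integral>x. Fd x \<partial>M) \<le> (\<integral>x. \<bar>Fd x\<bar> \<partial>M)" by (simp add: integral_abs_bound)
      also have "\<dots> \<le> (\<integral>x. 4 * nh * (norm x * ind (2 * nh) x) + e * nh * norm x \<partial>M)"
        by (rule integral_mono) (use intFd intind intn pw in auto)
      also have "\<dots> = 4 * nh * \<Psi> (2 * nh) + e * nh * K"
        using intind intn by (simp add: \<Psi>_def K_def)
      also have "\<dots> \<le> 4 * nh * (\<epsilon>/8) + nh * (\<epsilon>/2)"
      proof -
        have "\<Psi> (2 * nh) \<le> \<Psi> \<delta>0" by (rule \<Psi>mono) (use nhd in \<open>auto simp: nh_def\<close>)
        hence "\<Psi> (2 * nh) \<le> \<epsilon>/8" using N by (simp add: \<delta>0_def)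
        hence a: "4 * nh * \<Psi> (2 * nh) \<le> 4 * nh * (\<epsilon>/8)" by (rule mult_left_mono) (simp add: nh_def)
        have b: "e * nh * K \<le> nh * (\<epsilon>/2)" using eK mult_left_mono[OF eK, of nh]
          by (simp add: nh_def algebra_simps)
        show ?thesis using a b by linarith
      qed
      also have "\<dots> \<le> \<epsilon> * nh" using e0 by (simp add: nh_def algebra_simps)
      finally show "norm ((\<integral>x. \<beta> x * clampf \<sigma> ((inverse (norm y) *\<^sub>R y) \<bullet> x) \<partial>M) -
              (\<integral>x. \<beta> x * clampf \<sigma> ((inverse (norm w0) *\<^sub>R w0) \<bullet> x) \<partial>M) - GF \<bullet> (y - w0))
        \<le> \<epsilon> * norm (y - w0)" unfolding eq by (simp add: nh_def h_def)
    qed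
  qed
qed

lemma dens_le:
  fixes g :: "real \<times> real \<Rightarrow> ennreal"
  assumes "\<And>z. g z \<le> ennreal U" "g \<in> borel_measurable lborel" "A \<in> sets borel"
  shows "emeasure (density lborel g) A \<le> ennreal U * emeasure lborel A"
proof -
  have "emeasure (density lborel g) A = (\<integral>\<^sup>+ x. g x * indicator A x \<partial>lborel)"
    using assms by (simp add: emeasure_density)
  also have "\<dots> \<le> (\<integral>\<^sup>+ x. ennreal U * indicator A x \<partial>lborel)"
    by (rule nn_integral_mono) (auto simp: assms(1) indicator_def)
  also have "\<dots> = ennreal U * emeasure lborel A"
    using assms by (simp add: nn_integral_cmult_indicator)
  finally show ?thesis .
qed

lemma dens_ge:
  fixes g :: "real \<times> real \<Rightarrow> ennreal"
  assumes "\<And>z. z \<in> A \<Longrightarrow> ennreal c \<le> g z" "g \<in> borel_measurable lborel" "A \<in> sets borel"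
  shows "ennreal c * emeasure lborel A \<le> emeasure (density lborel g) A"
proof -
  have "ennreal c * emeasure lborel A = (\<integral>\<^sup>+ x. ennreal c * indicator A x \<partial>lborel)"
    using assms by (simp add: nn_integral_cmult_indicator)
  also have "\<dots> \<le> (\<integral>\<^sup>+ x. g x * indicator A x \<partial>lborel)"
    by (rule nn_integral_mono) (auto simp: assms(1) indicator_def)
  also have "\<dots> = emeasure (density lborel g) A"
    using assms by (simp add: emeasure_density)
  finally show ?thesis .
qed

lemma int_norm_iso:
  fixes Dx :: "(real^'d) measure"
  assumes "isotropic Dx" "sets Dx = sets borel" "prob_space Dx"
  shows "integrable Dx norm"
proof (rule Bochner_Integration.integrable_bound[of Dx "\<lambda>x. \<Sum>i\<in>UNIV. 1 + x $ i * x $ i"])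
  have "integrable Dx (\<lambda>x. x $ i * x $ i)" for i using assms(1) by (simp add: isotropic_def)
  moreover have "integrable Dx (\<lambda>x. 1::real)"
    using assms(3) by (simp add: prob_space.finite_measure finite_measure.integrable_const)
  ultimately show "integrable Dx (\<lambda>x. \<Sum>i\<in>UNIV. 1 + x $ i * x $ i)" by auto
  show "norm \<in> borel_measurable Dx" unfolding measurable_cong_sets[OF assms(2) refl] by measurable
  show "AE x in Dx. norm (norm x) \<le> norm (\<Sum>i\<in>UNIV. 1 + x $ i * x $ i)"
  proof (rule AE_I2)
    fix x :: "real^'d"
    have "norm x \<le> (\<Sum>i\<in>UNIV. \<bar>x $ i\<bar>)" by (rule norm_le_l1_cart)
    also have "\<dots> \<le> (\<Sum>i\<in>UNIV. 1 + x $ i * x $ i)"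
    proof (rule sum_mono)
      fix i
      have a: "0 \<le> (\<bar>x $ i\<bar> - 1) * (\<bar>x $ i\<bar> - 1)" by simp
      have b: "\<bar>x $ i\<bar> * \<bar>x $ i\<bar> = x $ i * x $ i" by (rule abs_mult_self_eq)
      show "\<bar>x $ i\<bar> \<le> 1 + x $ i * x $ i" using a b by (simp add: algebra_simps)
    qed
    finally show "norm (norm x) \<le> norm (\<Sum>i\<in>UNIV. 1 + x $ i * x $ i)"
      by simp
  qed
qed

theorem lemma3p2:
  fixes Dx :: "(real^'d) measure" and \<eta>f :: "real^'d \<Rightarrow> real"
    and w_star w_hat :: "real^'d" and \<eta> U R \<theta> \<sigma> :: real
  assumes eta_lt: "\<eta> < 1/2"
    and noise: "massart_noise \<eta> \<eta>f"
    and bounded: "UR_bounded U R Dx"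
    and w_star_unit: "norm w_star = 1"
    and w_hat_unit: "norm w_hat = 1"
    and theta: "0 < \<theta>" "\<theta> < pi / 2"
    and angle: "\<theta> < vec_angle w_hat w_star" "vec_angle w_hat w_star < pi - \<theta>"
    and sigma: "0 < \<sigma>" "\<sigma> \<le> R / (2 * U) * sqrt (1 - 2 * \<eta>) * sin \<theta>"
  shows "\<exists>G. (ramp_loss Dx (\<lambda>x. sgn1 (w_star \<bullet> x)) \<eta>f \<sigma> has_derivative (\<lambda>h. G \<bullet> h)) (at w_hat)
             \<and> norm G \<ge> R\<^sup>2 * (1 - 2 * \<eta>) / (8 * U)"
proof -
  from bounded have U0: "U > 0" and R0: "R > 0" and P: "prob_space Dx" and sets: "sets Dx = sets borel"
    and iso: "isotropic Dx" and dens: "\<forall>u1 u2. norm u1 = 1 \<and> norm u2 = 1 \<and> u1 \<bullet> u2 = 0 \<longrightarrow>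
        (\<exists>g :: real \<times> real \<Rightarrow> ennreal.
           distributed Dx lborel (\<lambda>x. (u1 \<bullet> x, u2 \<bullet> x)) g \<and>
           (\<forall>z. norm z \<le> R \<longrightarrow> ennreal (1 / U) \<le> g z) \<and>
           (\<forall>z. g z \<le> ennreal U))"
    unfolding UR_bounded_def by auto
  from noise have em: "\<eta>f \<in> borel_measurable borel" and eb: "\<And>x. 0 \<le> \<eta>f x \<and> \<eta>f x \<le> \<eta>"
    unfolding massart_noise_def by auto
  have eta0: "0 \<le> \<eta>" using eb[of 0] by auto
  define c where "c = w_hat \<bullet> w_star"
  have c1: "\<bar>c\<bar> \<le> 1" using Cauchy_Schwarz_ineq2[of w_hat w_star] w_hat_unit w_star_unit
    by (simp add: c_def)
  define s where "s = sqrt (1 - c\<^sup>2)"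
  have ang: "vec_angle w_hat w_star = arccos c"
    by (simp add: vec_angle_def c_def w_hat_unit w_star_unit)
  have sarc: "sin (arccos c) = s" unfolding s_def using c1 by (intro sin_arccos) auto
  have sth0: "sin \<theta> > 0" using theta by (intro sin_gt_zero) auto
  have ss: "sin \<theta> < s"
  proof (cases "arccos c \<le> pi/2")
    case True
    thus ?thesis using sin_monotone_2pi[of \<theta> "arccos c"] theta angle ang sarc by auto
  next
    case False
    have "sin (arccos c) = sin (pi - arccos c)" by simp
    moreover have "sin \<theta> < sin (pi - arccos c)"
      using sin_monotone_2pi[of \<theta> "pi - arccos c"] theta angle ang False by auto
    ultimately show ?thesis using sarc by simp
  qed
  have s0: "s > 0" using ss sth0 by linarith
  have whw: "w_hat \<bullet> w_hat = 1" "w_star \<bullet> w_star = 1"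
    using w_hat_unit w_star_unit by (simp_all add: power2_norm_eq_inner[symmetric])
  have nd: "norm (w_star - c *\<^sub>R w_hat) = s"
  proof -
    have "(w_star - c *\<^sub>R w_hat) \<bullet> (w_star - c *\<^sub>R w_hat) = 1 - c\<^sup>2"
      using whw by (simp add: inner_diff_left inner_diff_right c_def inner_commute power2_eq_square)
    thus ?thesis by (simp add: norm_eq_sqrt_inner s_def)
  qed
  define e where "e = (1/s) *\<^sub>R (w_star - c *\<^sub>R w_hat)"
  have ne: "norm e = 1" using nd s0 by (simp add: e_def)
  have we: "w_hat \<bullet> e = 0" using whw by (simp add: e_def inner_diff_right c_def)
  have wse: "w_star = c *\<^sub>R w_hat + s *\<^sub>R e" using s0 by (simp add: e_def)
  obtain g where dist: "distributed Dx lborel (\<lambda>x. (w_hat \<bullet> x, e \<bullet> x)) g"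
      and glow: "\<And>z. norm z \<le> R \<Longrightarrow> ennreal (1 / U) \<le> g z" and gup: "\<And>z. g z \<le> ennreal U"
    using dens[rule_format, of w_hat e] w_hat_unit ne we by blast
  have U1: "U \<ge> 1"
  proof -
    have "ennreal (1/U) \<le> ennreal U" using glow[of 0] gup[of 0] R0 by (auto intro: order_trans)
    hence "1/U \<le> U" using U0 by (simp add: ennreal_le_iff)
    hence "1 \<le> U * U" using U0 by (simp add: field_simps)
    show ?thesis
    proof (rule ccontr)
      assume "\<not> 1 \<le> U"
      hence "U * U < 1 * 1" using U0 by (intro mult_strict_mono) auto
      thus False using \<open>1 \<le> U * U\<close> by simp
    qed
  qed
  define \<beta> where "\<beta> x = sgn1 (w_star \<bullet> x) * (1 - 2 * \<eta>f x)" for x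
  have bm: "\<beta> \<in> borel_measurable borel" unfolding \<beta>_def sgn1_def using em by measurable
  have bb: "\<bar>\<beta> x\<bar> \<le> 1" for x using eb[of x] eta_lt by (auto simp: \<beta>_def sgn1_def)
  have intn: "integrable Dx norm" by (rule int_norm_iso[OF iso sets P])
  define X where "X = (\<lambda>x :: real^'d. (w_hat \<bullet> x, e \<bullet> x))"
  have Xm: "X \<in> measurable Dx lborel" using distributed_measurable[OF dist] by (simp add: X_def)
  have gm: "g \<in> borel_measurable lborel" using distributed_borel_measurable[OF dist] .
  have dd: "distr Dx lborel X = density lborel g" using distributed_distr_eq_density[OF dist] by (simp add: X_def)
  have spc: "space Dx = UNIV" using sets_eq_imp_space_eq[OF sets] by simp
  have emX: "emeasure Dx (X -` A) = emeasure (density lborel g) A" if "A \<in> sets borel" for A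
    using emeasure_distr[OF Xm, of A] that dd spc by simp
  have XAs: "X -` A \<in> sets Dx" if "A \<in> sets borel" for A
    using measurable_sets[OF Xm, of A] that spc by simp
  have ae: "AE x in Dx. \<bar>w_hat \<bullet> x\<bar> \<noteq> \<sigma>/2"
  proof -
    define Z where "Z = {\<sigma>/2, -\<sigma>/2} \<times> (UNIV :: real set)"
    have Zb: "Z \<in> sets borel" unfolding Z_def by (intro borel_Times) auto
    have "emeasure (lborel :: (real \<times> real) measure) Z = emeasure lborel {\<sigma>/2, -\<sigma>/2} * emeasure lborel (UNIV :: real set)"
      unfolding Z_def by (rule rect_lborel) auto
    also have "\<dots> = 0" by (simp add: emeasure_lborel_countable)
    finally have Z0: "emeasure (lborel :: (real \<times> real) measure) Z = 0" .
    have "emeasure Dx (X -` Z) \<le> ennreal U * emeasure lborel Z"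
      unfolding emX[OF Zb] by (rule dens_le[OF gup gm Zb])
    hence "emeasure Dx (X -` Z) = 0" using Z0 by simp
    hence N: "X -` Z \<in> null_sets Dx" using XAs[OF Zb] by auto
    show ?thesis
      by (rule AE_I'[OF N]) (auto simp: Z_def X_def abs_if split: if_splits)
  qed
  define F where "F w = (\<integral>x. \<beta> x * clampf \<sigma> ((inverse (norm w) *\<^sub>R w) \<bullet> x) \<partial>Dx)" for w :: "real^'d"
  define GF where "GF = (\<integral>x. (\<beta> x * (if \<bar>w_hat \<bullet> x\<bar> < \<sigma>/2 then 1 else 0)) *\<^sub>R (x - (w_hat \<bullet> x) *\<^sub>R w_hat) \<partial>Dx)"
  have dF: "(F has_derivative (\<lambda>h. GF \<bullet> h)) (at w_hat)"
    unfolding F_def GF_def by (rule diff_core[OF P sets intn bm bb w_hat_unit sigma(1) ae])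
  have intF: "integrable Dx (\<lambda>x. \<beta> x * clampf \<sigma> (c' \<bullet> x))" for c'
  proof (rule int_bounded[OF P, where C="\<sigma>/2"])
    show "(\<lambda>x. \<beta> x * clampf \<sigma> (c' \<bullet> x)) \<in> borel_measurable Dx"
      unfolding measurable_cong_sets[OF sets refl] using meas_test[OF bm] .
    show "norm (\<beta> x * clampf \<sigma> (c' \<bullet> x)) \<le> \<sigma>/2" for x
    proof -
      have "\<bar>clampf \<sigma> (c' \<bullet> x)\<bar> \<le> \<sigma>/2" using sigma(1) unfolding clampf_def by auto
      moreover have "\<bar>\<beta> x\<bar> * \<bar>clampf \<sigma> (c' \<bullet> x)\<bar> \<le> \<bar>clampf \<sigma> (c' \<bullet> x)\<bar>"
        using bb[of x] by (simp add: mult_left_le_one_le)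
      ultimately show ?thesis by (simp add: abs_mult)
    qed
  qed
  have RL: "ramp_loss Dx (\<lambda>x. sgn1 (w_star \<bullet> x)) \<eta>f \<sigma> = (\<lambda>w. 1/2 - F w / \<sigma>)"
  proof (rule ext)
    fix w :: "real^'d"
    have "ramp_loss Dx (\<lambda>x. sgn1 (w_star \<bullet> x)) \<eta>f \<sigma> w
        = (\<integral>x. 1/2 - \<beta> x * clampf \<sigma> ((inverse (norm w) *\<^sub>R w) \<bullet> x) / \<sigma> \<partial>Dx)"
      unfolding ramp_loss_def
    proof (rule Bochner_Integration.integral_cong[OF refl])
      fix x
      have f: "sgn1 (w_star \<bullet> x) = 1 \<or> sgn1 (w_star \<bullet> x) = -1" by (simp add: sgn1_def)
      have t: "(w \<bullet> x) / norm w = (inverse (norm w) *\<^sub>R w) \<bullet> x" by (simp add: divide_inverse mult.commute)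
      show "(1 - \<eta>f x) * ramp \<sigma> (- sgn1 (w_star \<bullet> x) * (w \<bullet> x) / norm w) +
          \<eta>f x * ramp \<sigma> (sgn1 (w_star \<bullet> x) * (w \<bullet> x) / norm w)
          = 1/2 - \<beta> x * clampf \<sigma> ((inverse (norm w) *\<^sub>R w) \<bullet> x) / \<sigma>"
        using loss_pointwise[OF sigma(1) f, of "\<eta>f x" "w \<bullet> x" "norm w"] t by (simp add: \<beta>_def)
    qed
    also have "\<dots> = 1/2 - F w / \<sigma>"
    proof -
      define hh where "hh = (\<lambda>x. \<beta> x * clampf \<sigma> ((inverse (norm w) *\<^sub>R w) \<bullet> x))"
      have ih: "integrable Dx hh" unfolding hh_def by (rule intF)
      have ic: "integrable Dx (\<lambda>x. 1/2::real)"
        using P by (simp add: prob_space.finite_measure finite_measure.integrable_const)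
      have "(\<integral>x. 1/2 - hh x / \<sigma> \<partial>Dx) = (\<integral>x. 1/2 \<partial>Dx) - (\<integral>x. hh x / \<sigma> \<partial>Dx)"
        by (rule Bochner_Integration.integral_diff[OF ic]) (use ih in simp)
      also have "\<dots> = 1/2 - (\<integral>x. hh x \<partial>Dx) / \<sigma>"
        using P by (simp add: prob_space.prob_space)
      finally show ?thesis unfolding F_def hh_def .
    qed
    finally show "ramp_loss Dx (\<lambda>x. sgn1 (w_star \<bullet> x)) \<eta>f \<sigma> w = 1/2 - F w / \<sigma>" .
  qed
  define G where "G = (- 1/\<sigma>) *\<^sub>R GF"
  have dR: "(ramp_loss Dx (\<lambda>x. sgn1 (w_star \<bullet> x)) \<eta>f \<sigma> has_derivative (\<lambda>h. G \<bullet> h)) (at w_hat)"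
    unfolding RL
    apply (rule has_derivative_eq_rhs)
     apply (rule derivative_eq_intros dF | simp)+
    using sigma(1) by (auto simp: G_def fun_eq_iff)
  have lb: "GF \<bullet> e \<ge> \<sigma> * (R\<^sup>2 * (1 - 2 * \<eta>) / (8 * U))"
  proof -
    define \<kappa> where "\<kappa> = \<bar>c\<bar> * \<sigma> / (2 * s)"
    have k0: "\<kappa> \<ge> 0" using s0 sigma(1) by (simp add: \<kappa>_def)
    have sk: "s * \<kappa> = \<bar>c\<bar> * \<sigma> / 2" using s0 by (simp add: \<kappa>_def)
    have e2: "0 < 1 - 2 * \<eta>" using eta_lt by simp
    have sq: "sqrt (1 - 2 * \<eta>) \<le> 1" using eta0 by simp
    have sq0: "0 \<le> sqrt (1 - 2 * \<eta>)" using e2 by simp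
    have sq2: "(sqrt (1 - 2 * \<eta>))\<^sup>2 = 1 - 2 * \<eta>" using e2 by simp
    have sin1: "sin \<theta> \<le> 1" by simp
    have kb: "\<kappa> \<le> R * sqrt (1 - 2 * \<eta>) / (4 * U)"
    proof -
      have "\<kappa> = \<bar>c\<bar> * (\<sigma> / (2 * s))" by (simp add: \<kappa>_def)
      also have "\<dots> \<le> \<sigma> / (2 * s)" using c1 s0 sigma(1) by (intro mult_left_le_one_le) auto
      also have "\<dots> \<le> \<sigma> / (2 * sin \<theta>)" using ss sth0 sigma(1)
        by (intro divide_left_mono) auto
      also have "\<dots> \<le> R * sqrt (1 - 2 * \<eta>) / (4 * U)"
      proof -
        have "\<sigma> \<le> R * sqrt (1 - 2 * \<eta>) * sin \<theta> / (2 * U)" using sigma(2) by simp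
        thus ?thesis using sth0 U0 by (simp add: field_simps)
      qed
      finally show ?thesis .
    qed
    have k2: "2 * U * \<kappa>\<^sup>2 \<le> R\<^sup>2 * (1 - 2 * \<eta>) / (8 * U)"
    proof -
      have "\<kappa>\<^sup>2 \<le> (R * sqrt (1 - 2 * \<eta>) / (4 * U))\<^sup>2" by (rule power_mono[OF kb k0])
      also have "\<dots> = R\<^sup>2 * (1 - 2 * \<eta>) / (16 * U\<^sup>2)" using sq2 by (simp add: power_mult_distrib power_divide)
      finally have "2 * U * \<kappa>\<^sup>2 \<le> 2 * U * (R\<^sup>2 * (1 - 2 * \<eta>) / (16 * U\<^sup>2))" using U0 by (intro mult_left_mono) auto
      also have "\<dots> = R\<^sup>2 * (1 - 2 * \<eta>) / (8 * U)" using U0 by (simp add: field_simps power2_eq_square)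
      finally show ?thesis .
    qed
    have kR: "\<kappa> < R / 2"
    proof -
      have "R * sqrt (1 - 2 * \<eta>) \<le> R * 1" using R0 sq by (intro mult_left_mono) auto
      also have "\<dots> \<le> R * U" using R0 U1 by (intro mult_left_mono) auto
      finally have "R * sqrt (1 - 2 * \<eta>) / (4 * U) \<le> R / 4"
        using U0 by (simp add: field_simps)
      thus ?thesis using kb R0 by linarith
    qed
    have sR: "\<sigma> \<le> R / 2"
    proof -
      have "R / (2 * U) * sqrt (1 - 2 * \<eta>) * sin \<theta> \<le> R / (2 * U) * 1 * 1"
        using R0 U0 sq sq0 sin1 sth0 by (intro mult_mono) auto
      also have "\<dots> \<le> R / 2" using R0 U1 by (simp add: field_simps)
      finally show ?thesis using sigma(2) by linarith
    qed
    define A where "A = {-\<sigma>/2<..<\<sigma>/2} \<times> ({-(3*R/4)..-(R/2)} \<union> {R/2..3*R/4})"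
    define B where "B = {-\<sigma>/2<..<\<sigma>/2} \<times> {-\<kappa>..\<kappa>}"
    have Ab: "A \<in> sets borel" unfolding A_def by (intro borel_Times) auto
    have Bb: "B \<in> sets borel" unfolding B_def by (intro borel_Times) auto
    have mA: "emeasure lborel A = ennreal (\<sigma> * (R/2))"
    proof -
      have "emeasure lborel ({-(3*R/4)..-(R/2)} \<union> {R/2..3*R/4})
          = emeasure lborel {-(3*R/4)..-(R/2)} + emeasure lborel {R/2..3*R/4::real}"
        using R0 by (intro plus_emeasure[symmetric]) auto
      also have "\<dots> = ennreal (R/4) + ennreal (R/4)" using R0 by simp
      also have "\<dots> = ennreal (R/2)" using R0 by (simp add: ennreal_plus[symmetric])
      finally have u: "emeasure lborel ({-(3*R/4)..-(R/2)} \<union> {R/2..3*R/4}) = ennreal (R/2)" .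
      show ?thesis unfolding A_def
        by (subst rect_lborel) (use u sigma(1) R0 in \<open>auto simp: ennreal_mult[symmetric] times_divide_eq_right[symmetric] simp del: times_divide_eq_right\<close>)
    qed
    have mB: "emeasure lborel B = ennreal (\<sigma> * (2 * \<kappa>))"
      unfolding B_def
      by (subst rect_lborel) (use sigma(1) k0 in \<open>auto simp: ennreal_mult[symmetric]\<close>)
    have Adisk: "norm z \<le> R" if "z \<in> A" for z
    proof -
      obtain a b where z: "z = (a, b)" by fastforce
      have a: "\<bar>a\<bar> \<le> R/4" using that sR by (auto simp: A_def z)
      have b: "\<bar>b\<bar> \<le> 3*R/4" using that R0 by (auto simp: A_def z)
      have "a\<^sup>2 \<le> (R/4)\<^sup>2" using a by (metis abs_ge_zero power2_abs power_mono)
      moreover have "b\<^sup>2 \<le> (3*R/4)\<^sup>2" using b by (metis abs_ge_zero power2_abs power_mono)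
      moreover have "0 \<le> R\<^sup>2" by simp
      ultimately have "a\<^sup>2 + b\<^sup>2 \<le> R\<^sup>2" by (simp add: power_divide power_mult_distrib) (use zero_le_power2[of R] in linarith)
      hence "sqrt (a\<^sup>2 + b\<^sup>2) \<le> sqrt (R\<^sup>2)" by (rule real_sqrt_le_mono)
      thus ?thesis using R0 by (simp add: z norm_Pair)
    qed
    have PA: "\<sigma> * R / (2 * U) \<le> measure Dx (X -` A)"
    proof -
      have "ennreal (1/U) * emeasure lborel A \<le> emeasure (density lborel g) A"
        by (rule dens_ge[OF _ gm Ab]) (rule glow[OF Adisk])
      hence h: "ennreal (1/U) * ennreal (\<sigma> * (R/2)) \<le> ennreal (measure Dx (X -` A))"
        unfolding mA emX[OF Ab, symmetric] finite_measure.emeasure_eq_measure[OF prob_space.finite_measure[OF P]] .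
      have "ennreal (1/U) * ennreal (\<sigma> * (R/2)) = ennreal (1/U * (\<sigma> * (R/2)))"
        by (rule ennreal_mult[symmetric]) (use U0 sigma(1) R0 in auto)
      hence "1/U * (\<sigma> * (R/2)) \<le> measure Dx (X -` A)" using h by simp
      thus ?thesis by (simp add: field_simps)
    qed
    have PB: "measure Dx (X -` B) \<le> U * (\<sigma> * (2 * \<kappa>))"
    proof -
      have "emeasure (density lborel g) B \<le> ennreal U * emeasure lborel B"
        by (rule dens_le[OF gup gm Bb])
      hence h: "ennreal (measure Dx (X -` B)) \<le> ennreal U * ennreal (\<sigma> * (2 * \<kappa>))"
        unfolding mB emX[OF Bb, symmetric] finite_measure.emeasure_eq_measure[OF prob_space.finite_measure[OF P]] .
      have "ennreal U * ennreal (\<sigma> * (2 * \<kappa>)) = ennreal (U * (\<sigma> * (2 * \<kappa>)))"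
        by (rule ennreal_mult[symmetric]) (use U0 sigma(1) k0 in auto)
      hence "ennreal (measure Dx (X -` B)) \<le> ennreal (U * (\<sigma> * (2 * \<kappa>)))" using h by simp
      thus ?thesis using U0 sigma(1) k0 by simp
    qed
    define I0 where "I0 x = (if \<bar>w_hat \<bullet> x\<bar> < \<sigma>/2 then 1 else 0::real)" for x :: "real^'d"
    have I0b: "I0 x = 0 \<or> I0 x = 1" for x by (simp add: I0_def)
    have mG: "(\<lambda>x. (\<beta> x * I0 x) *\<^sub>R (x - (w_hat \<bullet> x) *\<^sub>R w_hat)) \<in> borel_measurable Dx"
      unfolding measurable_cong_sets[OF sets refl] I0_def using meas_test2[OF bm] .
    have intG: "integrable Dx (\<lambda>x. (\<beta> x * I0 x) *\<^sub>R (x - (w_hat \<bullet> x) *\<^sub>R w_hat))"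
    proof (rule int_normdom[OF intn mG, where C=2])
      fix x
      have a: "\<bar>\<beta> x * I0 x\<bar> \<le> 1" using bb[of x] I0b[of x] by auto
      have b: "norm (x - (w_hat \<bullet> x) *\<^sub>R w_hat) \<le> 2 * norm x"
      proof -
        have "norm (x - (w_hat \<bullet> x) *\<^sub>R w_hat) \<le> norm x + \<bar>w_hat \<bullet> x\<bar>" using w_hat_unit
          by (metis mult.right_neutral norm_scaleR norm_triangle_ineq4)
        moreover have "\<bar>w_hat \<bullet> x\<bar> \<le> norm x" using Cauchy_Schwarz_ineq2[of w_hat x] w_hat_unit by simp
        ultimately show ?thesis by linarith
      qed
      show "norm ((\<beta> x * I0 x) *\<^sub>R (x - (w_hat \<bullet> x) *\<^sub>R w_hat)) \<le> 2 * norm x"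
        using mult_mono[OF a b] by simp
    qed
    have eqf: "(\<lambda>x. (\<beta> x * I0 x) *\<^sub>R (x - (w_hat \<bullet> x) *\<^sub>R w_hat) \<bullet> e) = (\<lambda>x. \<beta> x * I0 x * (e \<bullet> x))"
      using we by (intro ext) (simp add: algebra_simps inner_commute)
    have intb: "integrable Dx (\<lambda>x. \<beta> x * I0 x * (e \<bullet> x))"
      using integrable_inner_left[OF intG, of e] unfolding eqf .
    have GFe: "GF \<bullet> e = (\<integral>x. \<beta> x * I0 x * (e \<bullet> x) \<partial>Dx)"
    proof -
      have "GF \<bullet> e = (\<integral>x. (\<beta> x * I0 x) *\<^sub>R (x - (w_hat \<bullet> x) *\<^sub>R w_hat) \<bullet> e \<partial>Dx)"
        unfolding GF_def I0_def by (rule integral_inner_left[symmetric]) (rule intG[unfolded I0_def])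
      thus ?thesis unfolding eqf .
    qed
    have indI: "integrable Dx (\<lambda>x. indicator S (X x) :: real)" and indE: "(\<integral>x. indicator S (X x) \<partial>Dx) = measure Dx (X -` S)"
      if "S \<in> sets borel" for S
    proof -
      have m: "(\<lambda>x. indicator S (X x) :: real) \<in> borel_measurable Dx"
        by (rule measurable_compose[OF Xm]) (use that in simp)
      show "integrable Dx (\<lambda>x. indicator S (X x) :: real)"
        by (rule int_bounded[OF P m, where C=1]) (simp add: indicator_def)
      have "(\<lambda>x. indicator S (X x) :: real) = indicator (X -` S)" by (auto simp: indicator_def fun_eq_iff)
      thus "(\<integral>x. indicator S (X x) \<partial>Dx) = measure Dx (X -` S)" by (simp add: spc)
    qed
    have pw: "(1 - 2 * \<eta>) * (R/2) * indicator A (X x) - \<kappa> * indicator B (X x) \<le> \<beta> x * I0 x * (e \<bullet> x)" for x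
    proof -
      define a where "a = w_hat \<bullet> x"
      define b where "b = e \<bullet> x"
      have Xx: "X x = (a, b)" by (simp add: X_def a_def b_def)
      have ws: "w_star \<bullet> x = c * a + s * b" by (subst wse) (simp add: inner_add_left a_def b_def)
      have ef: "0 \<le> \<eta>f x" "\<eta>f x \<le> \<eta>" using eb[of x] by auto
      have ef2: "1 - 2 * \<eta> \<le> 1 - 2 * \<eta>f x" "0 \<le> 1 - 2 * \<eta>f x" using ef eta_lt by auto
      show ?thesis
      proof (cases "\<bar>a\<bar> < \<sigma>/2")
        case False
        hence "indicator A (X x) = (0::real)" "indicator B (X x) = (0::real)" "I0 x = 0"
          by (auto simp: Xx A_def B_def I0_def a_def indicator_def)
        thus ?thesis by simp
      next
        case True
        hence I1: "I0 x = 1" by (simp add: I0_def a_def)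
        have ca: "\<bar>c * a\<bar> \<le> \<bar>c\<bar> * \<sigma> / 2"
        proof -
          have "\<bar>c\<bar> * \<bar>a\<bar> \<le> \<bar>c\<bar> * (\<sigma> / 2)" using True by (intro mult_left_mono) auto
          thus ?thesis by (simp add: abs_mult)
        qed
        consider "b > \<kappa>" | "b < -\<kappa>" | "\<bar>b\<bar> \<le> \<kappa>" by linarith
        thus ?thesis
        proof cases
          case 1
          have "s * \<kappa> < s * b" using 1 s0 by simp
          hence pos: "w_star \<bullet> x \<ge> 0" using ws ca sk by linarith
          hence be: "\<beta> x = 1 - 2 * \<eta>f x" by (simp add: \<beta>_def sgn1_def)
          have nB: "indicator B (X x) = (0::real)" using 1 by (auto simp: Xx B_def indicator_def)
          have bpos: "b > 0" using 1 k0 by linarith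
          show ?thesis
          proof (cases "X x \<in> A")
            case True
            hence "R/2 \<le> b" using bpos R0 by (auto simp: Xx A_def)
            hence "(1 - 2 * \<eta>) * (R/2) \<le> (1 - 2 * \<eta>f x) * b"
              using ef2 R0 by (intro mult_mono) auto
            thus ?thesis using True nB be I1 by (simp add: b_def)
          next
            case False
            thus ?thesis using nB be I1 bpos ef2 by (simp add: b_def)
          qed
        next
          case 2
          have "s * b < s * (-\<kappa>)" using 2 s0 by (intro mult_strict_left_mono) auto
          hence neg: "w_star \<bullet> x < 0" using ws ca sk by linarith
          hence be: "\<beta> x = - (1 - 2 * \<eta>f x)" by (simp add: \<beta>_def sgn1_def)
          have nB: "indicator B (X x) = (0::real)" using 2 by (auto simp: Xx B_def indicator_def)
          have bneg: "b < 0" using 2 k0 by linarith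
          show ?thesis
          proof (cases "X x \<in> A")
            case True
            hence "R/2 \<le> -b" using bneg R0 by (auto simp: Xx A_def)
            hence "(1 - 2 * \<eta>) * (R/2) \<le> (1 - 2 * \<eta>f x) * (-b)"
              using ef2 R0 by (intro mult_mono) auto
            moreover have "\<beta> x * I0 x * (e \<bullet> x) = (1 - 2 * \<eta>f x) * (-b)" by (simp only: be I1 b_def; simp add: algebra_simps)
            ultimately show ?thesis using True nB by simp
          next
            case False
            have "0 \<le> (1 - 2 * \<eta>f x) * (-b)" using bneg ef2 by (intro mult_nonneg_nonneg) auto
            moreover have "\<beta> x * I0 x * (e \<bullet> x) = (1 - 2 * \<eta>f x) * (-b)" by (simp only: be I1 b_def; simp add: algebra_simps)
            ultimately show ?thesis using False nB by simp
          qed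
        next
          case 3
          have nA: "indicator A (X x) = (0::real)" using 3 kR by (auto simp: Xx A_def indicator_def)
          have iB: "indicator B (X x) = (1::real)" using 3 True by (auto simp: Xx B_def indicator_def)
          have "\<bar>\<beta> x * b\<bar> \<le> \<kappa>" using bb[of x] 3 by (simp add: abs_mult mult_le_one order_trans[OF mult_right_mono[OF bb[of x]]])
          hence "- \<kappa> \<le> \<beta> x * I0 x * (e \<bullet> x)" using I1 by (simp add: b_def abs_le_iff)
          thus ?thesis using nA iB by simp
        qed
      qed
    qed
    have "(1 - 2 * \<eta>) * (R/2) * measure Dx (X -` A) - \<kappa> * measure Dx (X -` B)
        = (\<integral>x. (1 - 2 * \<eta>) * (R/2) * indicator A (X x) - \<kappa> * indicator B (X x) \<partial>Dx)"
      using indI[OF Ab] indI[OF Bb] indE[OF Ab] indE[OF Bb] by simp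
    also have "\<dots> \<le> GF \<bullet> e" unfolding GFe
      by (rule integral_mono) (use pw indI[OF Ab] indI[OF Bb] intb in auto)
    finally have main: "(1 - 2 * \<eta>) * (R/2) * measure Dx (X -` A) - \<kappa> * measure Dx (X -` B) \<le> GF \<bullet> e" .
    have t1: "(1 - 2 * \<eta>) * (R/2) * (\<sigma> * R / (2 * U)) \<le> (1 - 2 * \<eta>) * (R/2) * measure Dx (X -` A)"
      using PA e2 R0 by (intro mult_left_mono) auto
    have t2: "\<kappa> * measure Dx (X -` B) \<le> \<kappa> * (U * (\<sigma> * (2 * \<kappa>)))"
      using PB k0 by (intro mult_left_mono) auto
    have t3: "\<kappa> * (U * (\<sigma> * (2 * \<kappa>))) = \<sigma> * (2 * U * \<kappa>\<^sup>2)" by (simp add: power2_eq_square algebra_simps)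
    have t4: "\<sigma> * (2 * U * \<kappa>\<^sup>2) \<le> \<sigma> * (R\<^sup>2 * (1 - 2 * \<eta>) / (8 * U))"
      using k2 sigma(1) by (intro mult_left_mono) auto
    have t5: "(1 - 2 * \<eta>) * (R/2) * (\<sigma> * R / (2 * U)) = 2 * (\<sigma> * (R\<^sup>2 * (1 - 2 * \<eta>) / (8 * U)))"
      using U0 by (simp add: field_simps power2_eq_square)
    show ?thesis using main t1 t2 t3 t4 t5 by linarith
  qed
  have "norm G = norm GF / \<sigma>" using sigma(1) by (simp add: G_def)
  moreover have "GF \<bullet> e \<le> norm GF" using Cauchy_Schwarz_ineq2[of GF e] ne by simp
  ultimately have "\<sigma> * (R\<^sup>2 * (1 - 2 * \<eta>) / (8 * U)) \<le> \<sigma> * norm G"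
    using lb sigma(1) by simp
  hence "norm G \<ge> R\<^sup>2 * (1 - 2 * \<eta>) / (8 * U)"
    using sigma(1) by (simp only: mult_le_cancel_left_pos)
  thus ?thesis using dR by blast
qed

end
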